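(* Let $G$ be a group and $H$ a subgroup. Let $\sim$ be a nontrivial equivalence relation on $G/H - \{\bar{1}\}$ such that if $\bar{a} \sim \bar{b}$ and $\bar{a} \neq \bar{b}$ then $\overline{a^{-1}} \sim \overline{a^{-1}b}$. Let $a,b \in G$. If $\overline{g^{-1}a} \sim \overline{g^{-1}b}$ for all $g \notin aH \cup bH$, then $\bar{a} = \bar{b}$.
   Context: $G/H$ is the set of left cosets and $\bar{a} = aH$. An equivalence relation is nontrivial if it has at least two classes. *)

theory Defs
  imports "HOL-Algebra.Left_Coset"
begin

end

theory Submission
  imports Defs
begin

lemma lcos_eq_iff:
  assumes grp: "group G" and sub: "subgroup H G"
    and x: "x \<in> carrier G" and y: "y \<in> carrier G"
  shows "(x <#\<^bsub>G\<^esub> H = y <#\<^bsub>G\<^esub> H) = (inv\<^bsub>G\<^esub> x \<otimes>\<^bsub>G\<^esub> y \<in> H)"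
proof
  interpret group G by fact
  assume "x <#\<^bsub>G\<^esub> H = y <#\<^bsub>G\<^esub> H"
  moreover have "y \<in> y <#\<^bsub>G\<^esub> H" using lcos_self[OF y sub] .
  ultimately show "inv\<^bsub>G\<^esub> x \<otimes>\<^bsub>G\<^esub> y \<in> H"
    using subgroup.lcos_module_imp[OF sub grp x] by simp
next
  interpret group G by fact
  assume h: "inv\<^bsub>G\<^esub> x \<otimes>\<^bsub>G\<^esub> y \<in> H"
  define k where "k = inv\<^bsub>G\<^esub> x \<otimes>\<^bsub>G\<^esub> y"
  have kc: "k \<in> carrier G" using k_def x y by simp
  have yk: "y = x \<otimes>\<^bsub>G\<^esub> k" using k_def x y by (simp add: m_assoc[symmetric])
  have kH: "k \<in> H" using h k_def by simp
  have "k <#\<^bsub>G\<^esub> H = H"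
  proof
    show "k <#\<^bsub>G\<^esub> H \<subseteq> H"
    proof
      fix w assume "w \<in> k <#\<^bsub>G\<^esub> H"
      then obtain h' where "h' \<in> H" "w = k \<otimes>\<^bsub>G\<^esub> h'" unfolding l_coset_def by blast
      then show "w \<in> H" using subgroup.m_closed[OF sub kH \<open>h' \<in> H\<close>] by simp
    qed
    show "H \<subseteq> k <#\<^bsub>G\<^esub> H"
    proof
      fix z assume z: "z \<in> H"
      have zc: "z \<in> carrier G" by (rule subgroup.mem_carrier[OF sub z])
      have "inv\<^bsub>G\<^esub> k \<otimes>\<^bsub>G\<^esub> z \<in> H"
        by (rule subgroup.m_closed[OF sub subgroup.m_inv_closed[OF sub kH] z])
      moreover have "z = k \<otimes>\<^bsub>G\<^esub> (inv\<^bsub>G\<^esub> k \<otimes>\<^bsub>G\<^esub> z)"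
        using kc zc by (simp add: m_assoc[symmetric])
      ultimately show "z \<in> k <#\<^bsub>G\<^esub> H" unfolding l_coset_def by blast
    qed
  qed
  then show "x <#\<^bsub>G\<^esub> H = y <#\<^bsub>G\<^esub> H"
    using lcos_m_assoc[OF subgroup.subset[OF sub] x kc] yk by simp
qed

theorem lemma3p8:
  fixes G (structure) and H :: "'a set" and R :: "('a set \<times> 'a set) set"
    and a b :: 'a
  assumes grp: "group G"
    and sub: "subgroup H G"
    and eqv: "equiv (lcosets H - {\<one> <# H}) R"
    and nontriv: "\<exists>C1 \<in> (lcosets H - {\<one> <# H}) // R.
                    \<exists>C2 \<in> (lcosets H - {\<one> <# H}) // R. C1 \<noteq> C2"
    and cond: "\<And>x y. x \<in> carrier G \<Longrightarrow> y \<in> carrier G \<Longrightarrow>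
                 (x <# H, y <# H) \<in> R \<Longrightarrow> x <# H \<noteq> y <# H \<Longrightarrow>
                 (inv x <# H, (inv x \<otimes> y) <# H) \<in> R"
    and a: "a \<in> carrier G" and b: "b \<in> carrier G"
    and hyp: "\<And>g. g \<in> carrier G \<Longrightarrow> g \<notin> (a <# H) \<union> (b <# H) \<Longrightarrow>
                 ((inv g \<otimes> a) <# H, (inv g \<otimes> b) <# H) \<in> R"
  shows "a <# H = b <# H"
proof (rule ccontr)
  interpret group G by fact
  assume ne: "a <# H \<noteq> b <# H"
  define c where "c = inv a \<otimes> b"
  have cc: "c \<in> carrier G" using a b c_def by simp
  have cH: "c \<notin> H" using ne lcos_eq_iff[OF grp sub a b] c_def by simp
  have oneH: "\<one> <# H = H" using lcos_mult_one subgroup.subset[OF sub] by blast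
  have ceq: "\<And>z. z \<in> carrier G \<Longrightarrow> z <# H = c <# H \<longleftrightarrow> inv z \<otimes> c \<in> H"
    using lcos_eq_iff[OF grp sub] cc by blast
  have Heq: "\<And>z. z \<in> carrier G \<Longrightarrow> z <# H = \<one> <# H \<longleftrightarrow> z \<in> H"
  proof -
    fix z assume z: "z \<in> carrier G"
    have "z <# H = \<one> <# H \<longleftrightarrow> inv z \<otimes> \<one> \<in> H" using lcos_eq_iff[OF grp sub z] by simp
    also have "\<dots> \<longleftrightarrow> z \<in> H" using z sub
      using subgroup.m_inv_closed[OF sub, of z] subgroup.m_inv_closed[OF sub, of "inv z"] by auto
    finally show "z <# H = \<one> <# H \<longleftrightarrow> z \<in> H" .
  qed
  have key: "\<And>z. z \<in> carrier G \<Longrightarrow> z \<notin> H \<Longrightarrow> z <# H \<noteq> c <# H \<Longrightarrow> (z <# H, c <# H) \<in> R"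
  proof -
    fix z assume z: "z \<in> carrier G" and zH: "z \<notin> H" and zc: "z <# H \<noteq> c <# H"
    define g where "g = a \<otimes> z"
    have gc: "g \<in> carrier G" using g_def a z by simp
    have ga: "g \<notin> a <# H"
    proof
      assume "g \<in> a <# H"
      then have "inv a \<otimes> g \<in> H" by (rule subgroup.lcos_module_imp[OF sub grp a])
      then show False using zH g_def a z by (simp add: m_assoc[symmetric])
    qed
    have gb: "g \<notin> b <# H"
    proof
      assume "g \<in> b <# H"
      then have "inv b \<otimes> g \<in> H" by (rule subgroup.lcos_module_imp[OF sub grp b])
      then have "inv (inv b \<otimes> g) \<in> H" by (rule subgroup.m_inv_closed[OF sub])
      moreover have "inv (inv b \<otimes> g) = inv z \<otimes> c"
        using g_def c_def a b z by (simp add: inv_mult_group m_assoc)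
      ultimately show False using zc ceq z by simp
    qed
    have e1: "inv g \<otimes> a = inv z" using g_def a z by (simp add: inv_mult_group m_assoc)
    have e2: "inv g \<otimes> b = inv z \<otimes> c" using g_def a b z c_def by (simp add: inv_mult_group m_assoc)
    have r: "(inv z <# H, (inv z \<otimes> c) <# H) \<in> R" using hyp[OF gc] ga gb e1 e2 by simp
    have d: "inv z <# H \<noteq> (inv z \<otimes> c) <# H"
      using lcos_eq_iff[OF grp sub, of "inv z" "inv z \<otimes> c"] z cc cH
      by (simp add: m_assoc[symmetric])
    have "(inv (inv z) <# H, (inv (inv z) \<otimes> (inv z \<otimes> c)) <# H) \<in> R"
      using cond[OF _ _ r d] z cc by simp
    then show "(z <# H, c <# H) \<in> R" using z cc by (simp add: m_assoc[symmetric])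
  qed
  let ?X = "lcosets H - {\<one> <# H}"
  have cX: "c <# H \<in> ?X"
  proof -
    have "c <# H \<in> lcosets H" using cc unfolding LCOSETS_def by blast
    moreover have "c <# H \<noteq> \<one> <# H" using Heq[OF cc] cH by blast
    ultimately show ?thesis by blast
  qed
  have all: "\<And>A. A \<in> ?X \<Longrightarrow> (A, c <# H) \<in> R"
  proof -
    fix A assume A: "A \<in> ?X"
    then obtain z where z: "z \<in> carrier G" "A = z <# H" unfolding LCOSETS_def by blast
    have "z \<notin> H" using A z Heq[OF z(1)] by blast
    then show "(A, c <# H) \<in> R"
    proof (cases "z <# H = c <# H")
      case True
      have "(c <# H, c <# H) \<in> R" using cX eqv unfolding equiv_def refl_on_def by blast
      then show ?thesis using True z(2) by simp
    next
      case False
      then show ?thesis using key[OF z(1) \<open>z \<notin> H\<close> False] z(2) by simp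
    qed
  qed
  have "\<And>C. C \<in> ?X // R \<Longrightarrow> C = R `` {c <# H}"
  proof -
    fix C assume "C \<in> ?X // R"
    then obtain A where A: "A \<in> ?X" "C = R `` {A}" unfolding quotient_def by blast
    then show "C = R `` {c <# H}" using equiv_class_eq[OF eqv all[OF A(1)]] by simp
  qed
  then show False using nontriv by blast
qed

end
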